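(* Let $(W,S)$ be a dihedral Coxeter system, i.e. $|S|=2$. For reflections $t,t'\in T$, we have $\ell(t')<\ell(t)$ if and only if $t'\sqsubseteq t$ and $t'\neq t$.
   Context: $(W,S)$ is a Coxeter system with length function $\ell$, reflections $T=\{wsw^{-1}:w\in W,\ s\in S\}$ and Bruhat order $\leqslant$. The Bruhat graph $\Omega_{W,S}$ has vertex set $W$ and an arrow $u\to v$ iff $uv^{-1}\in T$ and $u<v$; $\Omega_{W,S}(Y)$ is its induced subgraph on $Y$. A reflection subgroup $W'$ (a subgroup generated by reflections) has canonical Coxeter generators $S'=\{t\in T:N(t)\cap W'=\{t\}\}$, where $N(v)=\{t\in T:\ell(tv)<\ell(v)\}$; it is dihedral if $|S'|=2$. $t\sqsubseteq' t'$ iff $t=t'$ or there is a dihedral reflection subgroup $W'\ni t,t'$ such that the directed distance from $t$ to $t'$ in $\Omega_{W,S}(W')$ is finite; $\sqsubseteq$ is the transitive closure of $\sqsubseteq'$. *)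

theory Defs
  imports "HOL-Algebra.Algebra"
begin

definition word_prod :: "('a, 'b) monoid_scheme \<Rightarrow> 'a list \<Rightarrow> 'a" where
  "word_prod G ws = foldr (\<lambda>x y. x \<otimes>\<^bsub>G\<^esub> y) ws \<one>\<^bsub>G\<^esub>"

text \<open>Coxeter matrix entry: m(s,s') is the order of s s' (only finite orders give relators).\<close>
definition cox_relators :: "('a, 'b) monoid_scheme \<Rightarrow> 'a set \<Rightarrow> 'a list set" where
  "cox_relators G S = {concat (replicate m [s, s']) | s s' m.
      s \<in> S \<and> s' \<in> S \<and> 0 < m \<and> (s \<otimes>\<^bsub>G\<^esub> s') [^]\<^bsub>G\<^esub> m = \<one>\<^bsub>G\<^esub> \<and>
      (\<forall>k. 0 < k \<and> k < m \<longrightarrow> (s \<otimes>\<^bsub>G\<^esub> s') [^]\<^bsub>G\<^esub> k \<noteq> \<one>\<^bsub>G\<^esub>)}"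

text \<open>Congruence on words in S generated by the Coxeter relations (s s')^m(s,s') = 1
  (including s^2 = 1 for s = s').  Since generators are involutions, words in S suffice.\<close>
inductive cox_eq :: "('a, 'b) monoid_scheme \<Rightarrow> 'a set \<Rightarrow> 'a list \<Rightarrow> 'a list \<Rightarrow> bool"
  for G S where
  refl: "cox_eq G S u u"
| sym: "cox_eq G S u v \<Longrightarrow> cox_eq G S v u"
| trans: "cox_eq G S u v \<Longrightarrow> cox_eq G S v w \<Longrightarrow> cox_eq G S u w"
| rel: "r \<in> cox_relators G S \<Longrightarrow> cox_eq G S (u @ r @ v) (u @ v)"

text \<open>(W,S) is a Coxeter system: W is generated by the involutions S, and every relation
  among the generators is a consequence of the Coxeter relations, i.e. W has the Coxeter
  presentation on S.\<close>
definition coxeter_system :: "('a, 'b) monoid_scheme \<Rightarrow> 'a set \<Rightarrow> bool" where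
  "coxeter_system G S \<longleftrightarrow> group G \<and> S \<subseteq> carrier G \<and>
     (\<forall>s\<in>S. s \<noteq> \<one>\<^bsub>G\<^esub> \<and> s \<otimes>\<^bsub>G\<^esub> s = \<one>\<^bsub>G\<^esub>) \<and>
     generate G S = carrier G \<and>
     (\<forall>ws \<in> lists S. word_prod G ws = \<one>\<^bsub>G\<^esub> \<longrightarrow> cox_eq G S ws [])"

definition cox_length :: "('a, 'b) monoid_scheme \<Rightarrow> 'a set \<Rightarrow> 'a \<Rightarrow> nat" where
  "cox_length G S w = (LEAST n. \<exists>ws \<in> lists S. length ws = n \<and> word_prod G ws = w)"

definition reflections :: "('a, 'b) monoid_scheme \<Rightarrow> 'a set \<Rightarrow> 'a set" where
  "reflections G S = {w \<otimes>\<^bsub>G\<^esub> s \<otimes>\<^bsub>G\<^esub> inv\<^bsub>G\<^esub> w | w s. w \<in> carrier G \<and> s \<in> S}"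

definition bruhat_le :: "('a, 'b) monoid_scheme \<Rightarrow> 'a set \<Rightarrow> 'a \<Rightarrow> 'a \<Rightarrow> bool" where
  "bruhat_le G S = (\<lambda>x y. x \<in> carrier G \<and> (\<exists>t \<in> reflections G S. y = t \<otimes>\<^bsub>G\<^esub> x \<and>
                        cox_length G S x < cox_length G S y))\<^sup>*\<^sup>*"

definition bruhat_lt :: "('a, 'b) monoid_scheme \<Rightarrow> 'a set \<Rightarrow> 'a \<Rightarrow> 'a \<Rightarrow> bool" where
  "bruhat_lt G S u v \<longleftrightarrow> bruhat_le G S u v \<and> u \<noteq> v"

definition bruhat_arrow :: "('a, 'b) monoid_scheme \<Rightarrow> 'a set \<Rightarrow> 'a \<Rightarrow> 'a \<Rightarrow> bool" where
  "bruhat_arrow G S u v \<longleftrightarrow> u \<in> carrier G \<and> v \<in> carrier G \<and>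
     u \<otimes>\<^bsub>G\<^esub> inv\<^bsub>G\<^esub> v \<in> reflections G S \<and> bruhat_lt G S u v"

definition induced_reach :: "('a, 'b) monoid_scheme \<Rightarrow> 'a set \<Rightarrow> 'a set \<Rightarrow> 'a \<Rightarrow> 'a \<Rightarrow> bool" where
  "induced_reach G S Y u v \<longleftrightarrow> u \<in> Y \<and> v \<in> Y \<and>
     (\<lambda>x y. x \<in> Y \<and> y \<in> Y \<and> bruhat_arrow G S x y)\<^sup>*\<^sup>* u v"

definition left_descent_refl :: "('a, 'b) monoid_scheme \<Rightarrow> 'a set \<Rightarrow> 'a \<Rightarrow> 'a set" where
  "left_descent_refl G S v = {t \<in> reflections G S. cox_length G S (t \<otimes>\<^bsub>G\<^esub> v) < cox_length G S v}"

definition reflection_subgroup :: "('a, 'b) monoid_scheme \<Rightarrow> 'a set \<Rightarrow> 'a set \<Rightarrow> bool" where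
  "reflection_subgroup G S W' \<longleftrightarrow> (\<exists>Rs. Rs \<subseteq> reflections G S \<and> W' = generate G Rs)"

definition canonical_gens :: "('a, 'b) monoid_scheme \<Rightarrow> 'a set \<Rightarrow> 'a set \<Rightarrow> 'a set" where
  "canonical_gens G S W' = {t \<in> reflections G S. left_descent_refl G S t \<inter> W' = {t}}"

definition dihedral_refl_subgroup :: "('a, 'b) monoid_scheme \<Rightarrow> 'a set \<Rightarrow> 'a set \<Rightarrow> bool" where
  "dihedral_refl_subgroup G S W' \<longleftrightarrow> reflection_subgroup G S W' \<and> card (canonical_gens G S W') = 2"

definition sqsub1 :: "('a, 'b) monoid_scheme \<Rightarrow> 'a set \<Rightarrow> 'a \<Rightarrow> 'a \<Rightarrow> bool" where
  "sqsub1 G S t t' \<longleftrightarrow> t = t' \<or>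
     (\<exists>W'. dihedral_refl_subgroup G S W' \<and> t \<in> W' \<and> t' \<in> W' \<and> induced_reach G S W' t t')"

definition sqsub :: "('a, 'b) monoid_scheme \<Rightarrow> 'a set \<Rightarrow> 'a \<Rightarrow> 'a \<Rightarrow> bool" where
  "sqsub G S = (sqsub1 G S)\<^sup>+\<^sup>+"

end

theory Submission
  imports Defs
begin

locale cox =
  fixes G :: "('a, 'b) monoid_scheme" (structure) and S :: "'a set"
  assumes cs: "coxeter_system G S"
begin

sublocale group G using cs by (simp add: coxeter_system_def)

lemma S_carr: "S \<subseteq> carrier G" using cs by (simp add: coxeter_system_def)
lemma S_inv: "s \<in> S \<Longrightarrow> s \<otimes> s = \<one>" using cs by (simp add: coxeter_system_def)
lemma S_ne: "s \<in> S \<Longrightarrow> s \<noteq> \<one>" using cs by (simp add: coxeter_system_def)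
lemma gen: "generate G S = carrier G" using cs by (simp add: coxeter_system_def)
lemma S_invS: "s \<in> S \<Longrightarrow> inv s = s"
  using S_inv S_carr by (meson inv_equality subsetD)

lemma wp_Nil[simp]: "word_prod G [] = \<one>" by (simp add: word_prod_def)
lemma wp_Cons[simp]: "word_prod G (x # xs) = x \<otimes> word_prod G xs" by (simp add: word_prod_def)

lemma wp_closed[simp]: "ws \<in> lists S \<Longrightarrow> word_prod G ws \<in> carrier G"
  by (induction ws) (use S_carr in auto)

lemma wp_append: "ws \<in> lists S \<Longrightarrow> vs \<in> lists S \<Longrightarrow>
   word_prod G (ws @ vs) = word_prod G ws \<otimes> word_prod G vs"
proof (induction ws)
  case (Cons a ws)
  then have "a \<in> carrier G" using S_carr by auto
  with Cons show ?case by (simp add: m_assoc)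
qed simp

lemma wp_rev: "ws \<in> lists S \<Longrightarrow> word_prod G (rev ws) = inv (word_prod G ws)"
proof (induction ws)
  case Nil then show ?case by simp
next
  case (Cons x xs)
  then have x: "x \<in> S" "x \<in> carrier G" using S_carr by auto
  have "word_prod G (rev (x # xs)) = word_prod G (rev xs) \<otimes> x"
  proof -
    have "rev xs \<in> lists S" using Cons by auto
    then show ?thesis using Cons x wp_append[of "rev xs" "[x]"] by auto
  qed
  also have "\<dots> = inv (word_prod G xs) \<otimes> inv x" using Cons x S_invS by simp
  also have "\<dots> = inv (x \<otimes> word_prod G xs)" using Cons x by (simp add: inv_mult_group)
  finally show ?case by simp
qed

lemma gen_words: "g \<in> generate G S \<Longrightarrow> \<exists>ws\<in>lists S. word_prod G ws = g"
proof (induction rule: generate.induct)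
  case one then show ?case by (intro bexI[of _ "[]"]) auto
next
  case (incl h) then show ?case using S_carr by (intro bexI[of _ "[h]"]) auto
next
  case (inv h) then show ?case using S_carr S_invS by (intro bexI[of _ "[h]"]) auto
next
  case (eng h1 h2)
  then obtain u v where "u \<in> lists S" "v \<in> lists S" "word_prod G u = h1" "word_prod G v = h2" by blast
  then show ?case by (intro bexI[of _ "u @ v"]) (auto simp: wp_append)
qed

lemma len_le: "ws \<in> lists S \<Longrightarrow> cox_length G S (word_prod G ws) \<le> length ws"
  unfolding cox_length_def by (rule Least_le) blast

lemma len_ex: "g \<in> carrier G \<Longrightarrow> \<exists>ws\<in>lists S. length ws = cox_length G S g \<and> word_prod G ws = g"
proof -
  assume "g \<in> carrier G"
  then obtain ws where "ws \<in> lists S" "word_prod G ws = g" using gen gen_words by blast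
  then have "\<exists>n ws. ws \<in> lists S \<and> length ws = n \<and> word_prod G ws = g" by blast
  then show ?thesis unfolding cox_length_def by (smt (verit, best) LeastI_ex)
qed

definition red where "red ws \<longleftrightarrow> ws \<in> lists S \<and> cox_length G S (word_prod G ws) = length ws"

lemma red_ex: "g \<in> carrier G \<Longrightarrow> \<exists>ws. red ws \<and> word_prod G ws = g"
  using len_ex unfolding red_def by metis

lemma red_drop: assumes "red ws" shows "red (drop j ws)"
proof -
  let ?u = "take j ws" and ?v = "drop j ws"
  have ws: "ws = ?u @ ?v" by simp
  have l: "?u \<in> lists S" "?v \<in> lists S" using assms unfolding red_def
    by (metis in_listsI in_lists_conv_set in_set_takeD, metis in_listsI in_lists_conv_set in_set_dropD)
  have le: "cox_length G S (word_prod G ?v) \<le> length ?v" using len_le l by blast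
  show ?thesis
  proof (rule ccontr)
    assume "\<not> red ?v"
    then have lt: "cox_length G S (word_prod G ?v) < length ?v" using le l unfolding red_def by auto
    obtain v' where v': "v' \<in> lists S" "length v' = cox_length G S (word_prod G ?v)"
      "word_prod G v' = word_prod G ?v" using len_ex l by (meson wp_closed)
    have "word_prod G (?u @ v') = word_prod G ws"
      using l v' by (metis wp_append ws)
    moreover have "?u @ v' \<in> lists S" using l v' by simp
    ultimately have "cox_length G S (word_prod G ws) \<le> length (?u @ v')" by (metis len_le)
    also have "\<dots> < length ws" using lt v' by (metis length_append ws nat_add_left_cancel_less)
    finally show False using assms unfolding red_def by simp
  qed
qed

lemma red_Cons: "red (x # ys) \<Longrightarrow> red ys"
  using red_drop[of "x # ys" 1] by simp

lemma red_xx: "\<not> red (x # x # r)"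
proof
  assume r: "red (x # x # r)"
  then have x: "x \<in> S" "r \<in> lists S" unfolding red_def by auto
  have "word_prod G (x # x # r) = word_prod G r"
    using x S_carr S_inv by (simp add: m_assoc[symmetric] subsetD)
  then have "cox_length G S (word_prod G (x # x # r)) \<le> length r" using len_le x by metis
  then show False using r unfolding red_def by simp
qed

lemma len0: "g \<in> carrier G \<Longrightarrow> cox_length G S g = 0 \<Longrightarrow> g = \<one>"
  using len_ex by fastforce

lemma cancel1[simp]: "w \<in> carrier G \<Longrightarrow> x \<in> carrier G \<Longrightarrow> inv w \<otimes> (w \<otimes> x) = x"
  by (simp add: m_assoc[symmetric])
lemma cancel2[simp]: "w \<in> carrier G \<Longrightarrow> x \<in> carrier G \<Longrightarrow> w \<otimes> (inv w \<otimes> x) = x"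
  by (simp add: m_assoc[symmetric])

lemma refl_carr: "r \<in> reflections G S \<Longrightarrow> r \<in> carrier G"
  unfolding reflections_def using S_carr by auto

lemma S_refl: "s \<in> S \<Longrightarrow> s \<in> reflections G S"
  unfolding reflections_def using S_carr
  by (smt (verit, best) inv_one l_one mem_Collect_eq one_closed r_one subsetD)

lemma refl_inv: assumes "r \<in> reflections G S" shows "inv r = r"
proof -
  obtain w s where r: "r = w \<otimes> s \<otimes> inv w" "w \<in> carrier G" "s \<in> S"
    using assms unfolding reflections_def by auto
  have sc: "s \<in> carrier G" using r S_carr by auto
  have "r \<otimes> r = w \<otimes> (s \<otimes> s) \<otimes> inv w" using r sc by (simp add: m_assoc)
  also have "\<dots> = \<one>" using S_inv r sc by simp
  finally show ?thesis using refl_carr assms inv_equality by blast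
qed

lemma refl_ne: assumes "r \<in> reflections G S" shows "r \<noteq> \<one>"
proof
  assume r1: "r = \<one>"
  obtain w s where r: "r = w \<otimes> s \<otimes> inv w" "w \<in> carrier G" "s \<in> S"
    using assms unfolding reflections_def by auto
  have sc: "s \<in> carrier G" using r S_carr by auto
  have "inv w \<otimes> r \<otimes> w = s" using r sc by (simp add: m_assoc)
  then have "s = \<one>" using r1 r by simp
  then show False using S_ne r by simp
qed

lemma refl_conj: assumes "s \<in> S" "r \<in> reflections G S" shows "s \<otimes> r \<otimes> s \<in> reflections G S"
proof -
  obtain w s0 where r: "r = w \<otimes> s0 \<otimes> inv w" "w \<in> carrier G" "s0 \<in> S"
    using assms unfolding reflections_def by auto
  have sc: "s \<in> carrier G" "s0 \<in> carrier G" using r assms S_carr by auto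
  have "s \<otimes> r \<otimes> s = (s \<otimes> w) \<otimes> s0 \<otimes> inv (s \<otimes> w)"
    using r sc S_invS assms by (simp add: inv_mult_group m_assoc)
  then show ?thesis unfolding reflections_def using r sc by blast
qed

lemma arrow: assumes "u \<in> carrier G" "r \<in> reflections G S"
  "cox_length G S u < cox_length G S (r \<otimes> u)"
  shows "bruhat_arrow G S u (r \<otimes> u)"
proof -
  have rc: "r \<in> carrier G" using refl_carr assms by auto
  have le: "bruhat_le G S u (r \<otimes> u)" unfolding bruhat_le_def
    using assms by (intro r_into_rtranclp) blast
  have ne: "u \<noteq> r \<otimes> u" using assms(3) by auto
  have "u \<otimes> inv (r \<otimes> u) = inv r" using assms rc
    by (simp add: inv_mult_group m_assoc[symmetric])
  then show ?thesis unfolding bruhat_arrow_def bruhat_lt_def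
    using le ne assms rc refl_inv by auto
qed

abbreviation reach where
  "reach \<equiv> (\<lambda>x y. x \<in> carrier G \<and> y \<in> carrier G \<and> bruhat_arrow G S x y)\<^sup>*\<^sup>*"

lemma chain: assumes "red ws" shows "j \<le> length ws \<Longrightarrow> reach (word_prod G (drop j ws)) (word_prod G ws)"
proof (induction j)
  case 0 then show ?case by simp
next
  case (Suc j)
  have j: "j < length ws" using Suc by simp
  have d: "drop j ws = ws ! j # drop (Suc j) ws" using j by (simp add: Cons_nth_drop_Suc)
  have l: "ws \<in> lists S" using assms red_def by auto
  have sj: "ws ! j \<in> S" using l j by (simp add: in_lists_conv_set)
  have r1: "red (drop j ws)" "red (drop (Suc j) ws)" using red_drop assms by auto
  have dl: "drop (Suc j) ws \<in> lists S" using r1 red_def by auto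
  have "cox_length G S (word_prod G (drop (Suc j) ws)) < cox_length G S (ws ! j \<otimes> word_prod G (drop (Suc j) ws))"
  proof -
    have "cox_length G S (word_prod G (drop j ws)) = length ws - j"
      "cox_length G S (word_prod G (drop (Suc j) ws)) = length ws - Suc j"
      using r1 unfolding red_def by auto
    moreover have "word_prod G (drop j ws) = ws ! j \<otimes> word_prod G (drop (Suc j) ws)" using d by simp
    ultimately show ?thesis using j by simp
  qed
  then have "bruhat_arrow G S (word_prod G (drop (Suc j) ws)) (ws ! j \<otimes> word_prod G (drop (Suc j) ws))"
    using arrow sj S_refl dl by auto
  then have "reach (word_prod G (drop (Suc j) ws)) (word_prod G (drop j ws))"
  proof -
    have "ws ! j \<in> carrier G" using sj S_carr by auto
    then show ?thesis using d dl \<open>bruhat_arrow G S _ _\<close> by (intro r_into_rtranclp) auto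
  qed
  then show ?case using Suc j by (meson Suc_leD rtranclp_trans)
qed

end

definition sw :: "'a \<Rightarrow> 'a \<Rightarrow> 'a \<Rightarrow> 'a" where "sw a b x = (if x = a then b else a)"

fun altw :: "'a \<Rightarrow> 'a \<Rightarrow> 'a \<Rightarrow> nat \<Rightarrow> 'a list" where
  "altw a b x 0 = []"
| "altw a b x (Suc n) = x # altw a b (sw a b x) n"

lemma sw_mem: "x \<in> {a,b} \<Longrightarrow> sw a b x \<in> {a,b}" by (auto simp: sw_def)
lemma sw_sw: "a \<noteq> b \<Longrightarrow> x \<in> {a,b} \<Longrightarrow> sw a b (sw a b x) = x" by (auto simp: sw_def)
lemma sw_ne: "a \<noteq> b \<Longrightarrow> x \<in> {a,b} \<Longrightarrow> y \<in> {a,b} \<Longrightarrow> y \<noteq> x \<Longrightarrow> y = sw a b x"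
  by (auto simp: sw_def)
lemma altw_lists: "x \<in> {a,b} \<Longrightarrow> altw a b x n \<in> lists {a,b}"
proof (induction n arbitrary: x)
  case (Suc n) then show ?case using sw_mem[of x a b] by simp
qed simp

context cox begin

lemma red_alt: assumes "S = {a,b}" "a \<noteq> b" shows "red ws \<Longrightarrow> ws = altw a b (hd ws) (length ws)"
proof (induction ws)
  case Nil then show ?case by simp
next
  case (Cons x ys)
  have ry: "red ys" using Cons red_Cons by blast
  show ?case
  proof (cases ys)
    case Nil then show ?thesis by simp
  next
    case (Cons y zs)
    have "y \<noteq> x" using Cons.prems Cons red_xx by blast
    moreover have "x \<in> S" "y \<in> S" using Cons.prems Cons unfolding red_def by auto
    ultimately have "y = sw a b x" using sw_ne assms by metis
    then show ?thesis using Cons.IH ry Cons by simp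
  qed
qed

lemma refl_alt: assumes "S = {a,b}" "a \<noteq> b"
  shows "x \<in> S \<Longrightarrow> word_prod G (sw a b x # altw a b x n @ rev (altw a b (sw a b x) n)) \<in> reflections G S"
proof (induction n arbitrary: x)
  case 0
  then show ?case using S_refl sw_mem[of x a b] assms S_carr by auto
next
  case (Suc n)
  let ?y = "sw a b x"
  have y: "?y \<in> S" using sw_mem Suc assms by metis
  have yy: "sw a b ?y = x" using sw_sw Suc assms by metis
  let ?m = "altw a b ?y n @ rev (altw a b x n)"
  have IH: "word_prod G (x # ?m) \<in> reflections G S" using Suc.IH[OF y] yy by simp
  have ml: "x # ?m \<in> lists S"
  proof -
    have "altw a b ?y n \<in> lists S" "altw a b x n \<in> lists S"
      using altw_lists[of "?y" a b n] altw_lists[of x a b n] assms Suc.prems y by auto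
    then show ?thesis using Suc.prems by (simp only: in_lists_conv_set set_append set_rev) auto
  qed
  have "sw a b x # altw a b x (Suc n) @ rev (altw a b (sw a b x) (Suc n)) = ?y # (x # ?m) @ [?y]"
    using yy by simp
  moreover have "word_prod G (?y # (x # ?m) @ [?y]) = ?y \<otimes> word_prod G (x # ?m) \<otimes> ?y"
  proof -
    have yc: "?y \<in> carrier G" using y S_carr by auto
    have y1: "word_prod G [?y] = ?y" using yc by simp
    have L: "word_prod G ((x # ?m) @ [?y]) = word_prod G (x # ?m) \<otimes> ?y"
      using wp_append[OF ml, of "[?y]"] y1 y by simp
    have "word_prod G (?y # (x # ?m) @ [?y]) = ?y \<otimes> word_prod G ((x # ?m) @ [?y])"
      by (rule wp_Cons)
    also have "\<dots> = ?y \<otimes> word_prod G (x # ?m) \<otimes> ?y"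
      unfolding L using yc wp_closed[OF ml] by (simp add: m_assoc del: wp_Cons)
    finally show ?thesis .
  qed
  ultimately show ?case using refl_conj[OF y IH] by simp
qed


lemma forward: assumes S2: "S = {a,b}" "a \<noteq> b"
  and t: "t \<in> reflections G S" "t' \<in> reflections G S"
  and lt: "cox_length G S t' < cox_length G S t"
  shows "reach t' t"
proof -
  obtain w where w: "red w" "word_prod G w = t" using red_ex refl_carr t by blast
  obtain w' where w': "red w'" "word_prod G w' = t'" using red_ex refl_carr t by blast
  define k where "k = length w"
  define p where "p = length w'"
  have kl: "cox_length G S t = k" "cox_length G S t' = p"
    using w w' unfolding red_def k_def p_def by auto
  have pk: "p < k" using lt kl by simp
  define d where "d = drop (k - p) w"
  have ld: "length d = p" using pk unfolding d_def k_def by simp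
  have rd: "red d" using red_drop w d_def by blast
  show ?thesis
  proof (cases "d = w'")
    case True
    then show ?thesis using chain[OF w(1), of "k - p"] w w' d_def k_def by simp
  next
    case False
    define e where "e = drop (k - p - 1) w"
    have j1: "k - p - 1 < length w" "Suc (k - p - 1) = k - p" using pk k_def by auto
    have ed: "e = w ! (k - p - 1) # d" unfolding e_def d_def
      using Cons_nth_drop_Suc[OF j1(1)] j1(2) by simp
    have re: "red e" using red_drop w e_def by blast
    have le: "length e = Suc p" using ed ld by simp
    define y where "y = hd e"
    have ealt: "e = altw a b y (Suc p)" using red_alt[OF S2 re] le y_def by simp
    have yS: "y \<in> S" using re ealt unfolding red_def by auto
    have dalt: "d = altw a b (sw a b y) p" using ealt ed by simp
    have p0: "p > 0" using False ld w' p_def by (metis length_0_conv neq0_conv)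
    have w'alt: "w' = altw a b (hd w') p" using red_alt[OF S2 w'(1)] p_def by simp
    have hS: "hd w' \<in> S" using w' p0 p_def unfolding red_def
      by (metis hd_in_set in_lists_conv_set length_greater_0_conv)
    have "hd w' \<noteq> sw a b y" using False dalt w'alt by metis
    then have hy: "hd w' = y" using S2 hS yS by (auto simp: sw_def)
    have w'2: "w' = altw a b y p" using w'alt unfolding hy .
    have ysw: "sw a b (sw a b y) = y" using S2 yS by (auto simp: sw_def)
    have swS: "sw a b y \<in> S" using S2 yS by (auto simp: sw_def)
    have "word_prod G (sw a b (sw a b y) # altw a b (sw a b y) p @ rev (altw a b (sw a b (sw a b y)) p))
          \<in> reflections G S" using refl_alt[OF S2 swS] .
    then have A: "word_prod G (y # altw a b (sw a b y) p @ rev (altw a b y p)) \<in> reflections G S"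
      unfolding ysw .
    have "e @ rev w' = y # altw a b (sw a b y) p @ rev (altw a b y p)"
      unfolding w'2 ealt by simp
    then have rT: "word_prod G (e @ rev w') \<in> reflections G S" using A by simp
    have el: "e \<in> lists S" "w' \<in> lists S" using re w' unfolding red_def by auto
    have rl: "rev w' \<in> lists S" using el by (simp add: in_lists_conv_set)
    have r_eq: "word_prod G (e @ rev w') = word_prod G e \<otimes> inv t'"
      using wp_append[OF el(1) rl] wp_rev[OF el(2)] w' by simp
    have "word_prod G (e @ rev w') \<otimes> t' = word_prod G e"
      using r_eq refl_carr[OF t(2)] wp_closed[OF el(1)] by (simp add: m_assoc)
    moreover have "cox_length G S t' < cox_length G S (word_prod G e)"
      using re le kl unfolding red_def by simp
    ultimately have arr: "bruhat_arrow G S t' (word_prod G e)"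
      using arrow[OF _ rT, of t'] refl_carr t by metis
    have "reach t' (word_prod G e)"
      using arr refl_carr t el by (intro r_into_rtranclp) auto
    moreover have "reach (word_prod G e) t"
      using chain[OF w(1), of "k - p - 1"] w e_def k_def by simp
    ultimately show ?thesis by (rule rtranclp_trans)
  qed
qed

lemma canon: "canonical_gens G S (carrier G) = S"
proof
  show "S \<subseteq> canonical_gens G S (carrier G)"
  proof
    fix s assume s: "s \<in> S"
    have sc: "s \<in> carrier G" using s S_carr by auto
    have l1: "cox_length G S s \<le> 1" using len_le[of "[s]"] s sc by simp
    have l0: "cox_length G S s \<noteq> 0" using len0 sc S_ne s by blast
    have "left_descent_refl G S s \<inter> carrier G = {s}"
    proof
      show "{s} \<subseteq> left_descent_refl G S s \<inter> carrier G"
      proof -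
        have c1: "cox_length G S \<one> = 0" using len_le[of "[]"] by simp
        have "s \<in> left_descent_refl G S s" unfolding left_descent_refl_def
          using S_refl[OF s] S_inv[OF s] c1 l0 by simp
        then show ?thesis using sc by simp
      qed
      show "left_descent_refl G S s \<inter> carrier G \<subseteq> {s}"
      proof
        fix r assume r: "r \<in> left_descent_refl G S s \<inter> carrier G"
        then have rT: "r \<in> reflections G S" and "cox_length G S (r \<otimes> s) < cox_length G S s"
          unfolding left_descent_refl_def by auto
        then have "cox_length G S (r \<otimes> s) = 0" using l1 by simp
        then have "r \<otimes> s = \<one>" using len0 r sc by auto
        then have "inv s = r" using r sc inv_equality[of r s] by blast
        then have "r = inv s" by simp
        then show "r \<in> {s}" using S_invS s by simp
      qed
    qed
    then show "s \<in> canonical_gens G S (carrier G)"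
      unfolding canonical_gens_def using S_refl s by auto
  qed
next
  show "canonical_gens G S (carrier G) \<subseteq> S"
  proof
    fix t assume "t \<in> canonical_gens G S (carrier G)"
    then have tT: "t \<in> reflections G S" and D: "left_descent_refl G S t \<inter> carrier G = {t}"
      unfolding canonical_gens_def by auto
    obtain ws where ws: "red ws" "word_prod G ws = t" using red_ex refl_carr tT by blast
    have "ws \<noteq> []" using ws refl_ne[OF tT] by auto
    then obtain s rs where srs: "ws = s # rs" by (cases ws) auto
    have s: "s \<in> S" "rs \<in> lists S" using ws srs unfolding red_def by auto
    have sc: "s \<in> carrier G" using s S_carr by auto
    have "s \<otimes> (s \<otimes> word_prod G rs) = word_prod G rs"
      using sc wp_closed[OF s(2)] S_inv[OF s(1)] by (simp add: m_assoc[symmetric])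
    then have "s \<otimes> t = word_prod G rs" using ws srs by simp
    moreover have "cox_length G S (word_prod G rs) < cox_length G S t"
    proof -
      have "red rs" using red_Cons ws srs by blast
      then show ?thesis using ws srs unfolding red_def by auto
    qed
    ultimately have "s \<in> left_descent_refl G S t \<inter> carrier G"
      unfolding left_descent_refl_def using S_refl s sc by auto
    then show "t \<in> S" using D s by auto
  qed
qed

lemma whole_refl_subgroup: "reflection_subgroup G S (carrier G)"
proof -
  have "reflections G S \<subseteq> carrier G" using refl_carr by blast
  then have "generate G (reflections G S) \<subseteq> carrier G"
    using generate_is_subgroup subgroup.subset by blast
  moreover have "generate G S \<subseteq> generate G (reflections G S)"
    using mono_generate S_refl by blast
  ultimately show ?thesis unfolding reflection_subgroup_def using gen by blast
qed

lemma ble_len: "bruhat_le G S x y \<Longrightarrow> x = y \<or> cox_length G S x < cox_length G S y"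
  unfolding bruhat_le_def by (induction rule: rtranclp_induct) auto

lemma arrows_len: "(\<lambda>x y. P x y \<and> bruhat_arrow G S x y)\<^sup>*\<^sup>* x y \<Longrightarrow> x = y \<or> cox_length G S x < cox_length G S y"
proof (induction rule: rtranclp_induct)
  case (step y z)
  then have "y = z \<or> cox_length G S y < cox_length G S z"
    using ble_len unfolding bruhat_arrow_def bruhat_lt_def by blast
  with step show ?case by auto
qed simp

lemma sq1_len: "sqsub1 G S x y \<Longrightarrow> x = y \<or> cox_length G S x < cox_length G S y"
proof -
  assume "sqsub1 G S x y"
  then consider "x = y" | W' where "(\<lambda>x y. x \<in> W' \<and> y \<in> W' \<and> bruhat_arrow G S x y)\<^sup>*\<^sup>* x y"
    unfolding sqsub1_def induced_reach_def by blast
  then show ?thesis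
  proof cases
    case (2 W')
    show ?thesis using arrows_len[of "\<lambda>x y. x \<in> W' \<and> y \<in> W'" x y] 2 by simp
  qed simp
qed

lemma sq_len: "sqsub G S x y \<Longrightarrow> x = y \<or> cox_length G S x < cox_length G S y"
  unfolding sqsub_def
proof (induction rule: tranclp_induct)
  case (base y) then show ?case using sq1_len by blast
next
  case (step y z) then show ?case using sq1_len by fastforce
qed

end

theorem mainTheorem4:
  fixes G :: "('a, 'b) monoid_scheme" and S :: "'a set" and t t' :: 'a
  assumes "coxeter_system G S"
    and "card S = 2"
    and "t \<in> reflections G S" and "t' \<in> reflections G S"
  shows "cox_length G S t' < cox_length G S t \<longleftrightarrow> sqsub G S t' t \<and> t' \<noteq> t"
proof -
  interpret cox G S using assms(1) by (unfold_locales)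
  obtain a b where ab: "S = {a,b}" "a \<noteq> b" using assms(2) card_2_iff by metis
  show ?thesis
  proof
    assume lt: "cox_length G S t' < cox_length G S t"
    have r: "reach t' t" using forward[OF ab assms(3,4) lt] .
    have tc: "t \<in> carrier G" "t' \<in> carrier G" using refl_carr assms by auto
    have "dihedral_refl_subgroup G S (carrier G)"
      unfolding dihedral_refl_subgroup_def using whole_refl_subgroup canon assms(2) by simp
    then have "sqsub1 G S t' t"
      unfolding sqsub1_def induced_reach_def using r tc by blast
    then show "sqsub G S t' t \<and> t' \<noteq> t" using lt unfolding sqsub_def by auto
  next
    assume "sqsub G S t' t \<and> t' \<noteq> t"
    then show "cox_length G S t' < cox_length G S t" using sq_len by blast
  qed
qed

end
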